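(* Let $p$ be a prime, $s\geq 2$, and $\lambda_i\in\{0,1,\dots,p-1\}$ for $i\in\{0,\dots,s-1\}$. Then $$\phi_s\Big(\sum_{i=0}^{s-1}\lambda_ip^i\Big)=\gamma_s\Big(\Phi_{s-1}\Big(\sum_{i=0}^{s-1}\tau_s(\lambda_ip^i)\Big)\Big),$$ where the inner sum is computed in $\mathbb{Z}_{p^{s-1}}^p$.
   Context: For $r\geq1$ and $u\in\mathbb{Z}_{p^r}$ with $p$-ary expansion $u=\sum_{i=0}^{r-1}u_ip^i$, $\phi_r(u)=(u_{r-1},\dots,u_{r-1})+(u_0,\dots,u_{r-2})Y_{r-1}\in\mathbb{Z}_p^{p^{r-1}}$, where $Y_1=(0\ 1\ \cdots\ p-1)$ and $Y_k$ is the $k\times p^k$ matrix with first $k-1$ rows $(Y_{k-1}\ \cdots\ Y_{k-1})$ ($p$ copies) and last row $(0,\dots,0,1,\dots,1,\dots,p-1,\dots,p-1)$ (blocks of length $p^{k-1}$); $\phi_1=\mathrm{id}$; $\Phi_r:\mathbb{Z}_{p^r}^n\to\mathbb{Z}_p^{np^{r-1}}$ applies $\phi_r$ coordinatewise and concatenates. $\gamma_s$ is the coordinate permutation of $\mathbb{Z}_p^{p^{s-1}}$ given by $\gamma_s(\mathbf{x})_{j+ip+1}=\mathbf{x}_{jp^{s-2}+i+1}$ for $j\in\{0,\dots,p-1\}$, $i\in\{0,\dots,p^{s-2}-1\}$. The map $\tau_s:\mathbb{Z}_{p^s}\to\mathbb{Z}_{p^{s-1}}^p$ is $\tau_s(u)=\Phi_{s-1}^{-1}(\gamma_s^{-1}(\phi_s(u)))$.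 *)

theory Defs
  imports "HOL-Computational_Algebra.Primes"
begin

text \<open>Conventions: an element of Z_(p^r) is a natural number below p^r; a vector in
  Z_m^n is a list of length n of naturals below m. All indices are 0-based.\<close>

definition digit :: "nat \<Rightarrow> nat \<Rightarrow> nat \<Rightarrow> nat" where
  "digit p i u = (u div p ^ i) mod p"

text \<open>Entry (i,j) of the k x p^k matrix Y_k (0-based row i < k, column j < p^k).
  Y_1 = (0 1 ... p-1); Y_(k+1) has first k rows (Y_k ... Y_k) (p copies) and last
  row (0..0,1..1,...,p-1..p-1) with blocks of length p^k.\<close>
fun Ymat :: "nat \<Rightarrow> nat \<Rightarrow> nat \<Rightarrow> nat \<Rightarrow> nat" where
  "Ymat p 0 i j = 0"
| "Ymat p (Suc 0) i j = j"
| "Ymat p (Suc (Suc k)) i j =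
     (if i < Suc k then Ymat p (Suc k) i (j mod p ^ Suc k) else j div p ^ Suc k)"

definition phi :: "nat \<Rightarrow> nat \<Rightarrow> nat \<Rightarrow> nat list" where
  "phi p r u = (if r = 1 then [u mod p] else
     map (\<lambda>j. (digit p (r - 1) u + (\<Sum>k<r - 1. digit p k u * Ymat p (r - 1) k j)) mod p)
         [0..<p ^ (r - 1)])"

definition Phi :: "nat \<Rightarrow> nat \<Rightarrow> nat list \<Rightarrow> nat list" where
  "Phi p r v = concat (map (phi p r) v)"

definition gamma :: "nat \<Rightarrow> nat \<Rightarrow> nat list \<Rightarrow> nat list" where
  "gamma p s x = map (\<lambda>k. x ! ((k mod p) * p ^ (s - 2) + k div p)) [0..<p ^ (s - 1)]"

text \<open>tau_s(u) = Phi_(s-1)^(-1)(gamma_s^(-1)(phi_s(u))): the unique v in Z_(p^(s-1))^p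
  with gamma_s(Phi_(s-1)(v)) = phi_s(u).\<close>
definition tau :: "nat \<Rightarrow> nat \<Rightarrow> nat \<Rightarrow> nat list" where
  "tau p s u = (THE v. length v = p \<and> (\<forall>x\<in>set v. x < p ^ (s - 1)) \<and>
                       gamma p s (Phi p (s - 1) v) = phi p s u)"

definition vadd :: "nat \<Rightarrow> nat list \<Rightarrow> nat list \<Rightarrow> nat list" where
  "vadd m v w = map2 (\<lambda>a b. (a + b) mod m) v w"

definition vsum :: "nat \<Rightarrow> nat \<Rightarrow> nat list list \<Rightarrow> nat list" where
  "vsum n m vs = foldr (vadd m) vs (replicate n 0)"

end

theory Submission
  imports Defs "HOL-Number_Theory.Cong"
begin

lemma digit_mod:
  assumes "p > 0" "i < n"
  shows "digit p i (j mod p ^ n) = digit p i j"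
proof -
  have e: "p ^ n = p ^ i * p ^ (n - i)" using assms by (simp flip: power_add)
  have "j mod p ^ n = p ^ i * (j div p ^ i mod p ^ (n - i)) + j mod p ^ i"
    unfolding e by (rule mod_mult2_eq)
  then have "j mod p ^ n div p ^ i = j div p ^ i mod p ^ (n - i)"
    using assms by simp
  moreover have "p dvd p ^ (n - i)" using assms by (simp add: dvd_power)
  ultimately show ?thesis unfolding digit_def by (simp add: mod_mod_cancel)
qed

lemma Ymat_digit:
  assumes "p > 0" "r \<ge> 1" "i < r" "j < p ^ r"
  shows "Ymat p r i j = digit p i j"
  using assms
proof (induction p r i j rule: Ymat.induct)
  case (1 p i j) then show ?case by simp
next
  case (2 p i j) then show ?case by (simp add: digit_def)
next
  case (3 p k i j)
  show ?case
  proof (cases "i < Suc k")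
    case True
    have "j mod p ^ Suc k < p ^ Suc k" using 3 by simp
    then have "Ymat p (Suc k) i (j mod p ^ Suc k) = digit p i (j mod p ^ Suc k)"
      using 3 True by simp
    also have "\<dots> = digit p i j" using digit_mod[of p i "Suc k" j] 3 True by simp
    finally show ?thesis using True by simp
  next
    case False
    then have i: "i = Suc k" using 3 by simp
    have "j div p ^ Suc k < p" using 3 by (simp add: div_less_iff_less_mult mult.commute)
    then show ?thesis using i unfolding digit_def by simp
  qed
qed

lemma phi_len: "r \<ge> 1 \<Longrightarrow> length (phi p r u) = p ^ (r - 1)"
  by (simp add: phi_def)

lemma phi_nth:
  assumes "p > 0" "r \<ge> 1" "j < p ^ (r - 1)"
  shows "phi p r u ! j = (digit p (r - 1) u + (\<Sum>k<r - 1. digit p k u * digit p k j)) mod p"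
proof (cases "r = 1")
  case True
  then show ?thesis using assms by (simp add: phi_def digit_def)
next
  case False
  have "(\<Sum>k<r - 1. digit p k u * Ymat p (r - 1) k j) = (\<Sum>k<r - 1. digit p k u * digit p k j)"
    using assms False by (intro sum.cong refl) (simp add: Ymat_digit)
  then show ?thesis using False assms by (simp add: phi_def)
qed

lemma digit_expand:
  assumes "p > 0"
  shows "w mod p ^ r = (\<Sum>k<r. digit p k w * p ^ k)"
proof (induction r)
  case 0 then show ?case by simp
next
  case (Suc r)
  have "w mod p ^ Suc r = w mod (p ^ r * p)" by (simp add: mult.commute)
  also have "\<dots> = p ^ r * (w div p ^ r mod p) + w mod p ^ r" by (rule mod_mult2_eq)
  finally show ?case using Suc by (simp add: digit_def mult.commute)
qed

lemma digit_eq_imp_eq: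
  assumes "p > 0" "w < p ^ r" "w' < p ^ r" "\<And>k. k < r \<Longrightarrow> digit p k w = digit p k w'"
  shows "w = w'"
proof -
  have "w = w mod p ^ r" using assms by simp
  also have "\<dots> = (\<Sum>k<r. digit p k w * p ^ k)" using assms digit_expand by blast
  also have "\<dots> = (\<Sum>k<r. digit p k w' * p ^ k)" using assms by simp
  also have "\<dots> = w' mod p ^ r" using assms digit_expand by metis
  also have "\<dots> = w'" using assms by simp
  finally show ?thesis .
qed

lemma digit_pow:
  assumes "p \<ge> 2"
  shows "digit p k' (p ^ k) = (if k' = k then 1 else 0)"
proof -
  consider "k' < k" | "k' = k" | "k' > k" by linarith
  then show ?thesis
  proof cases
    case 1
    then have e: "p ^ k = p ^ k' * p ^ (k - k')" by (simp flip: power_add)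
    have "p ^ k div p ^ k' = p ^ (k - k')" using assms by (subst e) simp
    moreover have "p dvd p ^ (k - k')" using 1 by (simp add: dvd_power)
    ultimately show ?thesis using 1 unfolding digit_def by simp
  next
    case 2 then show ?thesis using assms unfolding digit_def by simp
  next
    case 3
    then have "p ^ k < p ^ k'" using assms by (simp add: power_strict_increasing)
    then show ?thesis using 3 unfolding digit_def by simp
  qed
qed

lemma digit_zero: "digit p k 0 = 0" by (simp add: digit_def)

lemma phi_inj:
  assumes "p \<ge> 2" "r \<ge> 1" "w < p ^ r" "w' < p ^ r" "phi p r w = phi p r w'"
  shows "w = w'"
proof (rule digit_eq_imp_eq[of p w r w'])
  show "p > 0" "w < p ^ r" "w' < p ^ r" using assms by auto
  have dlt: "digit p k x < p" for k x using assms unfolding digit_def by simp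
  have top: "digit p (r - 1) w = digit p (r - 1) w'"
  proof -
    have "phi p r w ! 0 = phi p r w' ! 0" using assms by simp
    moreover have "phi p r x ! 0 = digit p (r - 1) x" for x
    proof -
      have "(0::nat) < p ^ (r - 1)" using assms by simp
      then have "phi p r x ! 0 = (digit p (r - 1) x + (\<Sum>k<r - 1. digit p k x * digit p k 0)) mod p"
        using assms by (intro phi_nth) auto
      then show ?thesis using dlt by (simp add: digit_zero)
    qed
    ultimately show ?thesis by simp
  qed
  fix k assume k: "k < r"
  show "digit p k w = digit p k w'"
  proof (cases "k = r - 1")
    case True then show ?thesis using top by simp
  next
    case False
    then have kr: "k < r - 1" using k by simp
    have pk: "p ^ k < p ^ (r - 1)" using assms kr by (simp add: power_strict_increasing)
    have s: "(\<Sum>k'<r - 1. digit p k' x * digit p k' (p ^ k)) = digit p k x" for x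
    proof -
      have "(\<Sum>k'<r - 1. digit p k' x * digit p k' (p ^ k)) = (\<Sum>k'<r - 1. if k' = k then digit p k x else 0)"
        using assms by (intro sum.cong refl) (simp add: digit_pow)
      also have "\<dots> = digit p k x" using kr by simp
      finally show ?thesis .
    qed
    have pn: "phi p r x ! (p ^ k) = (digit p (r - 1) x + digit p k x) mod p" for x
      using phi_nth[of p r "p ^ k" x] assms pk s by simp
    have "phi p r w ! (p ^ k) = phi p r w' ! (p ^ k)" using assms by simp
    then have "(digit p (r - 1) w + digit p k w) mod p = (digit p (r - 1) w + digit p k w') mod p"
      unfolding pn using top by simp
    then have "digit p k w mod p = digit p k w' mod p"
      using cong_add_lcancel_nat[of "digit p (r - 1) w" "digit p k w" "digit p k w'" p] by (simp add: cong_def) 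
    then show ?thesis using dlt by simp
  qed
qed


definition Tv :: "nat \<Rightarrow> nat \<Rightarrow> nat \<Rightarrow> nat list" where
  "Tv p s u = map (\<lambda>a. (u div p + (u mod p) * a * p ^ (s - 2)) mod p ^ (s - 1)) [0..<p]"

lemma digit_add_low:
  assumes "p > 0" "k < m"
  shows "digit p k (x + c * p ^ m) = digit p k x"
proof -
  have e: "p ^ m = p ^ k * p ^ (m - k)" using assms by (simp flip: power_add)
  have "(x + c * p ^ m) div p ^ k = x div p ^ k + c * p ^ (m - k)"
  proof -
    have "x + c * p ^ m = x + (c * p ^ (m - k)) * p ^ k" unfolding e by (simp add: ac_simps)
    then show ?thesis using assms by (simp only:) (simp add: div_mult_self2)
  qed
  moreover obtain q where "p ^ (m - k) = p * q" using assms
    by (metis dvd_def dvd_power zero_less_diff)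
  ultimately show ?thesis unfolding digit_def
    by (simp add: mult.left_commute[of c p])
qed

lemma digit_add_high:
  assumes "p > 0"
  shows "digit p m (x + c * p ^ m) = (digit p m x + c) mod p"
  using assms unfolding digit_def by (simp add: mod_add_right_eq add.commute)

lemma digit_div: "digit p k (u div p) = digit p (Suc k) u"
  unfolding digit_def by (simp add: div_mult2_eq mult.commute)

lemma digit_lin0: "p > 0 \<Longrightarrow> b < p ^ m \<Longrightarrow> a < p \<Longrightarrow> digit p 0 (a + b * p) = a"
  unfolding digit_def by simp

lemma digit_linS: "p > 0 \<Longrightarrow> a < p \<Longrightarrow> digit p (Suc k) (a + b * p) = digit p k b"
  unfolding digit_def by (simp add: div_mult2_eq)

lemma Tv_len: "length (Tv p s u) = p" by (simp add: Tv_def)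

lemma Tv_exist:
  assumes "p \<ge> 2" "s \<ge> 2" "a < p" "b < p ^ (s - 2)"
  shows "phi p (s - 1) (Tv p s u ! a) ! b = phi p s u ! (a + b * p)"
proof -
  obtain m where m: "s = Suc (Suc m)" using assms by (metis add_2_eq_Suc le_Suc_ex)
  define w where "w = (u div p + (u mod p * a) * p ^ m) mod p ^ Suc m"
  have p0: "p > 0" using assms by simp
  have tw: "Tv p s u ! a = w" using assms m unfolding Tv_def w_def by (simp add: mult.assoc)
  have dw1: "digit p k w = digit p (Suc k) u" if "k < m" for k
    using that p0 unfolding w_def
    by (simp only: digit_mod[OF p0, of k "Suc m"] digit_add_low digit_div)
  have dw2: "digit p m w = (digit p (Suc m) u + u mod p * a) mod p"
    using p0 unfolding w_def
    by (simp only: digit_mod[OF p0, of m "Suc m"] digit_add_high digit_div)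
  have bm: "b < p ^ m" using assms m by simp
  have "phi p (Suc m) w ! b = (digit p m w + (\<Sum>k<m. digit p k w * digit p k b)) mod p"
    using phi_nth[of p "Suc m" b w] p0 bm by simp
  also have "\<dots> = ((digit p (Suc m) u + u mod p * a) mod p + (\<Sum>k<m. digit p (Suc k) u * digit p k b)) mod p"
    using dw1 dw2 by simp
  also have "\<dots> = (digit p (Suc m) u + (u mod p * a + (\<Sum>k<m. digit p (Suc k) u * digit p k b))) mod p"
    by (simp add: mod_add_left_eq add.assoc)
  also have "\<dots> = (digit p (Suc m) u + (\<Sum>k<Suc m. digit p k u * digit p k (a + b * p))) mod p"
  proof -
    have "(\<Sum>k<Suc m. digit p k u * digit p k (a + b * p)) =
          digit p 0 u * digit p 0 (a + b * p) + (\<Sum>k<m. digit p (Suc k) u * digit p (Suc k) (a + b * p))"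
      by (rule sum.lessThan_Suc_shift)
    also have "\<dots> = u mod p * a + (\<Sum>k<m. digit p (Suc k) u * digit p k b)"
      using p0 assms bm by (simp add: digit_lin0[OF p0 bm] digit_linS) (simp add: digit_def)
    finally show ?thesis by simp
  qed
  also have "\<dots> = phi p s u ! (a + b * p)"
  proof -
    have "a + b * p < p ^ Suc m"
    proof -
      have "a + b * p < p + b * p" using assms by simp
      also have "\<dots> = (b + 1) * p" by simp
      also have "\<dots> \<le> p ^ m * p" using bm by (intro mult_right_mono) auto
      finally show ?thesis by (simp add: mult.commute)
    qed
    then show ?thesis using phi_nth[of p s "a + b * p" u] p0 m by simp
  qed
  finally show ?thesis using tw m by simp
qed




lemma phi_len2: "s \<ge> 2 \<Longrightarrow> length (phi p (s - 1) x) = p ^ (s - 2)"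
proof -
  assume "s \<ge> 2"
  then obtain m where "s = Suc (Suc m)" by (metis add_2_eq_Suc le_Suc_ex)
  then show ?thesis by (simp add: phi_def)
qed

lemma pow_split: "s \<ge> 2 \<Longrightarrow> (p::nat) ^ (s - 1) = p ^ (s - 2) * p"
proof -
  assume "s \<ge> 2"
  then obtain m where "s = Suc (Suc m)" by (metis add_2_eq_Suc le_Suc_ex)
  then show ?thesis by (simp add: mult.commute)
qed

lemma concat_nth_blocks:
  assumes "\<forall>x\<in>set xs. length (f x) = L" "a < length xs" "b < L"
  shows "concat (map f xs) ! (a * L + b) = f (xs ! a) ! b"
  using assms
proof (induction xs arbitrary: a)
  case Nil then show ?case by simp
next
  case (Cons x xs)
  show ?case
  proof (cases a)
    case 0 then show ?thesis using Cons by (simp add: nth_append)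
  next
    case (Suc a')
    have "concat (map f (x # xs)) ! (a * L + b) = concat (map f xs) ! (a' * L + b)"
      using Cons Suc by (simp add: nth_append)
    then show ?thesis using Cons Suc by simp
  qed
qed

lemma gamma_Phi_nth:
  assumes "p \<ge> 2" "s \<ge> 2" "length v = p" "k < p ^ (s - 1)"
  shows "gamma p s (Phi p (s - 1) v) ! k = phi p (s - 1) (v ! (k mod p)) ! (k div p)"
proof -
  have e: "p ^ (s - 1) = p ^ (s - 2) * p" using assms(2) by (rule pow_split)
  have kb: "k div p < p ^ (s - 2)" using assms e by (simp add: div_less_iff_less_mult)
  have km: "k mod p < p" using assms by simp
  have "gamma p s (Phi p (s - 1) v) ! k = Phi p (s - 1) v ! ((k mod p) * p ^ (s - 2) + k div p)"
    using assms unfolding gamma_def by simp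
  also have "\<dots> = phi p (s - 1) (v ! (k mod p)) ! (k div p)"
    unfolding Phi_def using assms kb km
    by (intro concat_nth_blocks) (auto simp: phi_len)
  finally show ?thesis .
qed

lemma gamma_len: "length (gamma p s x) = p ^ (s - 1)" by (simp add: gamma_def)

lemma Tv_good:
  assumes "p \<ge> 2" "s \<ge> 2"
  shows "gamma p s (Phi p (s - 1) (Tv p s u)) = phi p s u"
proof (rule nth_equalityI)
  show "length (gamma p s (Phi p (s - 1) (Tv p s u))) = length (phi p s u)"
    using assms by (simp add: gamma_len phi_len)
  fix k assume "k < length (gamma p s (Phi p (s - 1) (Tv p s u)))"
  then have k: "k < p ^ (s - 1)" by (simp add: gamma_len)
  have e: "p ^ (s - 1) = p ^ (s - 2) * p" using assms(2) by (rule pow_split)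
  have kb: "k div p < p ^ (s - 2)" using k e by (intro less_mult_imp_div_less) simp
  have "gamma p s (Phi p (s - 1) (Tv p s u)) ! k = phi p (s - 1) (Tv p s u ! (k mod p)) ! (k div p)"
    by (rule gamma_Phi_nth) (use assms k in \<open>simp_all add: Tv_len\<close>)
  also have "\<dots> = phi p s u ! (k mod p + k div p * p)"
    using assms kb by (intro Tv_exist) auto
  also have "k mod p + k div p * p = k" by simp
  finally show "gamma p s (Phi p (s - 1) (Tv p s u)) ! k = phi p s u ! k" .
qed

lemma Tv_unique:
  assumes "p \<ge> 2" "s \<ge> 2" "length v = p" "\<forall>x\<in>set v. x < p ^ (s - 1)"
    "gamma p s (Phi p (s - 1) v) = phi p s u"
  shows "v = Tv p s u"
proof (rule nth_equalityI)
  show "length v = length (Tv p s u)" using assms by (simp add: Tv_len)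
  fix a assume "a < length v"
  then have a: "a < p" using assms by simp
  have "phi p (s - 1) (v ! a) = phi p (s - 1) (Tv p s u ! a)"
  proof (rule nth_equalityI)
    show "length (phi p (s - 1) (v ! a)) = length (phi p (s - 1) (Tv p s u ! a))"
      using assms by (simp add: phi_len)
    fix b assume "b < length (phi p (s - 1) (v ! a))"
    then have b: "b < p ^ (s - 2)" using phi_len2[OF assms(2), of p "v ! a"] by argo
    define k where "k = a + b * p"
    have e: "p ^ (s - 1) = p ^ (s - 2) * p" using assms(2) by (rule pow_split)
    have "k < p ^ (s - 1)"
    proof -
      have "a + b * p < p + b * p" using a by simp
      also have "\<dots> = (b + 1) * p" by simp
      also have "\<dots> \<le> p ^ (s - 2) * p" using b by (intro mult_right_mono) auto
      finally show ?thesis using e k_def by simp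
    qed
    moreover have "k mod p = a" "k div p = b" using a k_def by auto
    ultimately have "phi p (s - 1) (v ! a) ! b = gamma p s (Phi p (s - 1) v) ! k"
      using gamma_Phi_nth[of p s v k] assms(1,2,3) by (simp only:)
    also have "\<dots> = phi p s u ! k" by (simp only: assms(5))
    also have "\<dots> = phi p (s - 1) (Tv p s u ! a) ! b"
      unfolding k_def by (rule sym, rule Tv_exist) (use assms a b in auto)
    finally show "phi p (s - 1) (v ! a) ! b = phi p (s - 1) (Tv p s u ! a) ! b" .
  qed
  moreover have "v ! a < p ^ (s - 1)" using assms a by auto
  moreover have "Tv p s u ! a < p ^ (s - 1)" using assms a by (simp add: Tv_def)
  moreover have "p \<ge> 2" "s - 1 \<ge> 1" using assms by auto
  ultimately show "v ! a = Tv p s u ! a"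
    using phi_inj[of p "s - 1" "v ! a" "Tv p s u ! a"] by blast
qed

lemma tau_eq:
  assumes "p \<ge> 2" "s \<ge> 2"
  shows "tau p s u = Tv p s u"
  unfolding tau_def
proof (rule the_equality)
  show "length (Tv p s u) = p \<and> (\<forall>x\<in>set (Tv p s u). x < p ^ (s - 1)) \<and>
        gamma p s (Phi p (s - 1) (Tv p s u)) = phi p s u"
  proof (intro conjI)
    show "length (Tv p s u) = p" by (rule Tv_len)
    show "\<forall>x\<in>set (Tv p s u). x < p ^ (s - 1)" using assms by (auto simp: Tv_def)
    show "gamma p s (Phi p (s - 1) (Tv p s u)) = phi p s u" using assms by (rule Tv_good)
  qed
  fix v assume "length v = p \<and> (\<forall>x\<in>set v. x < p ^ (s - 1)) \<and> gamma p s (Phi p (s - 1) v) = phi p s u"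
  then show "v = Tv p s u" using Tv_unique assms by blast
qed

lemma vsum_nth:
  assumes "\<forall>v\<in>set vs. length v = n"
  shows "length (vsum n m vs) = n \<and> (\<forall>a<n. vsum n m vs ! a = sum_list (map (\<lambda>v. v ! a) vs) mod m)"
  using assms
proof (induction vs)
  case Nil then show ?case by (simp add: vsum_def)
next
  case (Cons x xs)
  have e: "vsum n m (x # xs) = vadd m x (vsum n m xs)" by (simp add: vsum_def)
  have l: "length (vsum n m xs) = n" and nx: "\<And>a. a < n \<Longrightarrow> vsum n m xs ! a = sum_list (map (\<lambda>v. v ! a) xs) mod m"
    using Cons by auto
  have lx: "length x = n" using Cons.prems by simp
  show ?case
  proof (intro conjI allI impI)
    show "length (vsum n m (x # xs)) = n" unfolding e vadd_def using l lx by simp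
    fix a assume a: "a < n"
    have "vsum n m (x # xs) ! a = (x ! a + vsum n m xs ! a) mod m"
      unfolding e vadd_def using l lx a by simp
    also have "\<dots> = (x ! a + sum_list (map (\<lambda>v. v ! a) xs)) mod m"
      using nx[OF a] by (simp add: mod_add_right_eq)
    finally show "vsum n m (x # xs) ! a = sum_list (map (\<lambda>v. v ! a) (x # xs)) mod m" by simp
  qed
qed


lemma digit_sums:
  fixes p n :: nat and lam :: "nat \<Rightarrow> nat"
  assumes "p > 0" "\<forall>i<Suc n. lam i < p"
  shows "(\<Sum>i<Suc n. lam i * p ^ i div p) = (\<Sum>i<Suc n. lam i * p ^ i) div p"
    and "(\<Sum>i<Suc n. lam i * p ^ i mod p) = (\<Sum>i<Suc n. lam i * p ^ i) mod p"
proof -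
  define R where "R = (\<Sum>i<n. lam (Suc i) * p ^ i)"
  have l0: "lam 0 < p" using assms by auto
  have U: "(\<Sum>i<Suc n. lam i * p ^ i) = lam 0 + p * R"
    unfolding R_def sum.lessThan_Suc_shift by (simp add: sum_distrib_left mult.left_commute[of _ p])
  have "(\<Sum>i<Suc n. lam i * p ^ i div p) = lam 0 div p + (\<Sum>i<n. lam (Suc i) * p ^ Suc i div p)"
    unfolding sum.lessThan_Suc_shift by simp
  also have "\<dots> = R" unfolding R_def using l0 assms(1)
    by (simp add: mult.left_commute[of _ p])
  also have "R = (\<Sum>i<Suc n. lam i * p ^ i) div p" unfolding U using l0 assms(1) by simp
  finally show "(\<Sum>i<Suc n. lam i * p ^ i div p) = (\<Sum>i<Suc n. lam i * p ^ i) div p" .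
  have "(\<Sum>i<Suc n. lam i * p ^ i mod p) = lam 0 mod p + (\<Sum>i<n. lam (Suc i) * p ^ Suc i mod p)"
    unfolding sum.lessThan_Suc_shift by simp
  also have "\<dots> = lam 0" using l0 by (simp add: mult.left_commute[of _ p])
  also have "\<dots> = (\<Sum>i<Suc n. lam i * p ^ i) mod p" unfolding U using l0 by simp
  finally show "(\<Sum>i<Suc n. lam i * p ^ i mod p) = (\<Sum>i<Suc n. lam i * p ^ i) mod p" .
qed

theorem proposition1:
  fixes p s :: nat and lam :: "nat \<Rightarrow> nat"
  assumes "prime p" and "s \<ge> 2" and "\<forall>i<s. lam i < p"
  shows "phi p s (\<Sum>i<s. lam i * p ^ i) =
         gamma p s (Phi p (s - 1) (vsum p (p ^ (s - 1)) (map (\<lambda>i. tau p s (lam i * p ^ i)) [0..<s])))"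
proof -
  have p2: "p \<ge> 2" using assms(1) by (rule prime_ge_2_nat)
  have p0: "p > 0" using p2 by simp
  define U where "U = (\<Sum>i<s. lam i * p ^ i)"
  define M where "M = p ^ (s - 1)"
  define c where "c = p ^ (s - 2)"
  obtain n where n: "s = Suc n" using assms(2) by (cases s) auto
  have mt: "map (\<lambda>i. tau p s (lam i * p ^ i)) [0..<s] = map (\<lambda>i. Tv p s (lam i * p ^ i)) [0..<s]"
    using tau_eq[OF p2 assms(2)] by simp
  define vs where "vs = map (\<lambda>i. Tv p s (lam i * p ^ i)) [0..<s]"
  have lens: "\<forall>v\<in>set vs. length v = p" unfolding vs_def by (auto simp: Tv_len)
  note VS = vsum_nth[OF lens, of M]
  have V: "vsum p M vs = Tv p s U"
  proof (rule nth_equalityI)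
    show "length (vsum p M vs) = length (Tv p s U)" using VS by (simp add: Tv_len)
    fix a assume "a < length (vsum p M vs)"
    then have a: "a < p" using VS by simp
    have "vsum p M vs ! a = sum_list (map (\<lambda>v. v ! a) vs) mod M" using VS a by simp
    also have "sum_list (map (\<lambda>v. v ! a) vs) = (\<Sum>i<s. Tv p s (lam i * p ^ i) ! a)"
      unfolding vs_def map_map interv_sum_list_conv_sum_set_nat
      by (simp add: atLeast0LessThan comp_def)
    also have "\<dots> = (\<Sum>i<s. (lam i * p ^ i div p + lam i * p ^ i mod p * a * c) mod M)"
      using a unfolding Tv_def M_def c_def by simp
    also have "(\<dots>) mod M = (\<Sum>i<s. lam i * p ^ i div p + lam i * p ^ i mod p * a * c) mod M"
      by (rule mod_sum_eq)
    also have "(\<Sum>i<s. lam i * p ^ i div p + lam i * p ^ i mod p * a * c)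
        = (\<Sum>i<s. lam i * p ^ i div p) + (\<Sum>i<s. lam i * p ^ i mod p) * a * c"
      by (simp add: sum.distrib sum_distrib_right)
    also have "\<dots> = U div p + U mod p * a * c"
      using digit_sums[OF p0, of n lam] assms(3) n unfolding U_def by simp
    also have "(U div p + U mod p * a * c) mod M = Tv p s U ! a"
      using a unfolding Tv_def M_def c_def by simp
    finally show "vsum p M vs ! a = Tv p s U ! a" .
  qed
  show ?thesis
    unfolding mt U_def[symmetric] M_def[symmetric] vs_def[symmetric] V
    using Tv_good[OF p2 assms(2)] by simp
qed

end
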